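(* Let $T\in(\mathbb{C}^n)^{\otimes3}$ be an $r$-diagonalisable symmetric tensor with slices $T_1,\dots,T_n$, and let $T^{(a)}=\sum_{i=1}^na_iT_i$ be a linear combination of the slices of rank $r$ such that $\kappa_F(T^{(a)})<k_F$ (with $k_F>0$). Let $\tilde A=2k_FT^{(a)}(T^{(a)})^*$ and let $\sigma_1\ge\dots\ge\sigma_r$ be its $r$ nonzero eigenvalues. Then $\sigma_r\ge 2/r$.
   Context: $T$ is $r$-diagonalisable if $T=\sum_{i=1}^ru_i^{\otimes3}$ with $u_1,\dots,u_r\in\mathbb{C}^n$ linearly independent. The $k$-th slice of $T$ is $T_k=(T_{ijk})_{i,j}$. For a matrix $M$, $\kappa_F(M)=\|M\|_F^2+\|M^\dagger\|_F^2$ with $M^\dagger$ the Moore–Penrose pseudoinverse. *)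

theory Defs
  imports "HOL-Analysis.Analysis"
begin

type_synonym 'n tensor3 = "'n \<Rightarrow> 'n \<Rightarrow> 'n \<Rightarrow> complex"

definition sym_tensor :: "'n tensor3 \<Rightarrow> bool" where
  "sym_tensor T \<longleftrightarrow> (\<forall>i j k. T i j k = T j i k \<and> T i j k = T i k j)"

definition r_diagonalisable :: "nat \<Rightarrow> ('n::finite) tensor3 \<Rightarrow> bool" where
  "r_diagonalisable r T \<longleftrightarrow>
     (\<exists>u :: nat \<Rightarrow> complex^'n.
        inj_on u {..<r} \<and> vec.independent (u ` {..<r}) \<and>
        (\<forall>i j k. T i j k = (\<Sum>l<r. u l $ i * u l $ j * u l $ k)))"

definition slice :: "('n::finite) tensor3 \<Rightarrow> 'n \<Rightarrow> complex^'n^'n" where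
  "slice T k = (\<chi> i j. T i j k)"

definition slice_comb :: "('n::finite) tensor3 \<Rightarrow> complex^'n \<Rightarrow> complex^'n^'n" where
  "slice_comb T a = (\<Sum>k\<in>UNIV. (\<chi> i j. a $ k * slice T k $ i $ j))"

definition cadjoint :: "complex^'n^'m \<Rightarrow> complex^'m^'n" where
  "cadjoint M = (\<chi> i j. cnj (M $ j $ i))"

definition is_pinv :: "complex^'n^'m \<Rightarrow> complex^'m^'n \<Rightarrow> bool" where
  "is_pinv M X \<longleftrightarrow> M ** X ** M = M \<and> X ** M ** X = X \<and>
     cadjoint (M ** X) = M ** X \<and> cadjoint (X ** M) = X ** M"

text \<open>Moore--Penrose pseudoinverse (exists and is unique for every complex matrix).\<close>
definition pinv :: "complex^'n^'m \<Rightarrow> complex^'m^'n" where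
  "pinv M = (THE X. is_pinv M X)"

definition frob_sq :: "complex^'n^'m \<Rightarrow> real" where
  "frob_sq M = (\<Sum>i\<in>UNIV. \<Sum>j\<in>UNIV. (cmod (M $ i $ j))^2)"

definition kappa_F :: "complex^'n^'m \<Rightarrow> real" where
  "kappa_F M = frob_sq M + frob_sq (pinv M)"

definition is_eigenvalue :: "complex^'n^'n \<Rightarrow> complex \<Rightarrow> bool" where
  "is_eigenvalue A \<sigma> \<longleftrightarrow> (\<exists>v. v \<noteq> 0 \<and> A *v v = \<sigma> *s v)"

end

theory Submission
  imports Defs
begin

lemma cadj_cadj[simp]: "cadjoint (cadjoint A) = A"
  by (simp add: cadjoint_def vec_eq_iff)

lemma cadj_mult: "cadjoint (A ** B) = cadjoint B ** cadjoint A"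
  by (simp add: cadjoint_def vec_eq_iff matrix_matrix_mult_def mult.commute)

lemma cadj_add: "cadjoint (A + B) = cadjoint A + cadjoint B"
  by (simp add: cadjoint_def vec_eq_iff)

lemma cadj_scaleR: "cadjoint (c *\<^sub>R A) = c *\<^sub>R cadjoint A"
  by (simp add: cadjoint_def vec_eq_iff complex_cnj_scaleR)

lemma cadj_diff: "cadjoint (A - B) = cadjoint A - cadjoint B"
  by (simp add: cadjoint_def vec_eq_iff)

lemma cadj_zero[simp]: "cadjoint 0 = 0"
  by (simp add: cadjoint_def vec_eq_iff)

lemma cadj_mat1[simp]: "cadjoint (mat 1 :: complex^'n^'n) = mat 1"
  by (simp add: cadjoint_def vec_eq_iff mat_def)

lemma mm_add_r: "(A + B) ** C = A ** C + B ** (C::'a::semiring_1^'n^'m)"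
  by (simp add: vec_eq_iff matrix_matrix_mult_def distrib_right sum.distrib)

lemma mm_sub_r: "(A - B) ** C = A ** C - B ** (C::'a::ring_1^'n^'m)"
  by (simp add: vec_eq_iff matrix_matrix_mult_def left_diff_distrib sum_subtractf)

lemma mm_sub_l: "C ** (A - B) = C ** A - C ** (B::'a::ring_1^'n^'m)"
  by (simp add: vec_eq_iff matrix_matrix_mult_def right_diff_distrib sum_subtractf)

lemma mm_scaleR_l: "(c *\<^sub>R A) ** B = c *\<^sub>R (A ** (B::complex^'n^'m))"
  by (simp add: vec_eq_iff matrix_matrix_mult_def scaleR_sum_right)

lemma mm_zero_l[simp]: "(0::complex^'n^'m) ** B = 0"
  by (simp add: vec_eq_iff matrix_matrix_mult_def)

lemma mm_zero_r[simp]: "B ** (0::complex^'n^'m) = 0"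
  by (simp add: vec_eq_iff matrix_matrix_mult_def)

lemma self_adj_zero:
  fixes A :: "complex^'n^'m"
  assumes "A ** cadjoint A = 0" shows "A = 0"
proof -
  have "A $ i $ k = 0" for i k
  proof -
    have "(A ** cadjoint A) $ i $ i = (\<Sum>k\<in>UNIV. of_real ((cmod (A $ i $ k))\<^sup>2))"
      by (simp add: matrix_matrix_mult_def cadjoint_def complex_mult_cnj cmod_power2)
    hence "(\<Sum>k\<in>UNIV. of_real ((cmod (A $ i $ k))\<^sup>2)) = (0::complex)" using assms by simp
    hence "(\<Sum>k\<in>UNIV. (cmod (A $ i $ k))\<^sup>2) = 0"
      by (metis of_real_eq_0_iff of_real_sum)
    hence "(cmod (A $ i $ k))\<^sup>2 = 0"
      using sum_nonneg_eq_0_iff[of UNIV "\<lambda>k. (cmod (A $ i $ k))\<^sup>2"] by simp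
    thus ?thesis by simp
  qed
  thus ?thesis by (simp add: vec_eq_iff)
qed

lemma cancel_adj:
  fixes M :: "complex^'n^'m" and P R :: "complex^'n^'k"
  assumes "P ** cadjoint M ** M = R ** cadjoint M ** M"
  shows "P ** cadjoint M = R ** cadjoint M"
proof -
  let ?D = "(P - R) ** cadjoint M"
  have "?D ** cadjoint ?D = (P ** cadjoint M ** M - R ** cadjoint M ** M) ** cadjoint (P - R)"
    by (simp add: cadj_mult matrix_mul_assoc mm_sub_r mm_sub_l cadj_diff)
  also have "\<dots> = 0" using assms by simp
  finally have "?D = 0" by (rule self_adj_zero)
  thus ?thesis by (simp add: mm_sub_r)
qed

fun mpow :: "complex^'n^'n \<Rightarrow> nat \<Rightarrow> complex^'n^'n" where
  "mpow H 0 = mat 1"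
| "mpow H (Suc k) = mpow H k ** H"

lemma mpow_comm: "mpow H k ** H = H ** mpow H k"
  by (induction k) (simp_all add: matrix_mul_assoc[symmetric])

lemma mpow_add: "mpow H (a + b) = mpow H a ** mpow H b"
  by (induction b) (simp_all add: matrix_mul_assoc)

lemma mpow_adj: "cadjoint H = H \<Longrightarrow> cadjoint (mpow H k) = mpow H k"
  by (induction k) (simp_all add: cadj_mult mpow_comm)

lemma cancel_pow:
  fixes H :: "complex^'n^'n"
  assumes herm: "cadjoint H = H"
  shows "P ** mpow H k ** H = R ** mpow H k ** H \<Longrightarrow> P ** H = R ** H"
proof (induction k arbitrary: P R)
  case 0 thus ?case by simp
next
  case (Suc k)
  have "(P ** mpow H k) ** cadjoint H ** H = (R ** mpow H k) ** cadjoint H ** H"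
    using Suc.prems herm by (simp add: matrix_mul_assoc)
  hence "(P ** mpow H k) ** cadjoint H = (R ** mpow H k) ** cadjoint H" by (rule cancel_adj)
  hence "P ** mpow H k ** H = R ** mpow H k ** H" using herm by simp
  thus ?case by (rule Suc.IH)
qed


lemma mm_scaleR_r: "B ** (c *\<^sub>R A) = c *\<^sub>R (B ** (A::complex^'n^'m))"
  by (simp add: vec_eq_iff matrix_matrix_mult_def scaleR_sum_right)

lemma linear_rmul: "linear (\<lambda>Q::complex^'n^'m. Q ** C)"
  by (rule linearI) (simp_all add: mm_add_r mm_scaleR_l)

lemma rng_shift: "range (\<lambda>k. f (k + j)) = insert (f j) (range (\<lambda>k. f (k + Suc j)))"
proof (rule set_eqI, rule iffI)
  fix x assume "x \<in> range (\<lambda>k. f (k + j))"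
  then obtain k where k: "x = f (k + j)" by blast
  show "x \<in> insert (f j) (range (\<lambda>k. f (k + Suc j)))"
  proof (cases k)
    case 0 thus ?thesis using k by simp
  next
    case (Suc k') thus ?thesis using k by (auto intro!: image_eqI[of _ _ k'])
  qed
next
  fix x assume "x \<in> insert (f j) (range (\<lambda>k. f (k + Suc j)))"
  then show "x \<in> range (\<lambda>k. f (k + j))"
  proof
    assume "x = f j" thus ?thesis by (auto intro!: image_eqI[of _ _ 0])
  next
    assume "x \<in> range (\<lambda>k. f (k + Suc j))"
    then obtain k where "x = f (k + Suc j)" by blast
    thus ?thesis by (auto intro!: image_eqI[of _ _ "Suc k"])
  qed
qed

lemma rng_mul: "range (\<lambda>k. mpow H (k + Suc j)) = (\<lambda>Q. Q ** mpow H (Suc j)) ` range (mpow H)"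
proof -
  have "(\<lambda>k. mpow H (k + Suc j)) = (\<lambda>Q. Q ** mpow H (Suc j)) \<circ> mpow H"
    by (rule ext) (simp only: o_apply mpow_add)
  thus ?thesis by (simp only: image_comp)
qed

lemma exists_Q:
  fixes H :: "complex^'n^'n"
  shows "\<exists>j Q. Q \<in> span (range (mpow H)) \<and> Q ** mpow H (Suc j) = mpow H j"
proof -
  define W where "W j = span (range (\<lambda>k. mpow H (k + j)))" for j
  have ex: "\<exists>j. mpow H j \<in> W (Suc j)"
  proof (rule ccontr)
    assume "\<not> ?thesis"
    hence nin: "mpow H j \<notin> W (Suc j)" for j by blast
    have step: "dim (W j) = dim (W (Suc j)) + 1" for j
    proof -
      have "dim (W j) = dim (insert (mpow H j) (range (\<lambda>k. mpow H (k + Suc j))))"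
        unfolding W_def dim_span by (subst rng_shift) (rule refl)
      also have "\<dots> = dim (range (\<lambda>k. mpow H (k + Suc j))) + 1"
        using nin[of j] unfolding W_def dim_insert by (simp only: if_False)
      also have "\<dots> = dim (W (Suc j)) + 1" unfolding W_def dim_span ..
      finally show ?thesis .
    qed
    have dW: "dim (W 0) = dim (W j) + j" for j
    proof (induction j)
      case 0 show ?case by simp
    next
      case (Suc j) thus ?case using step[of j] by linarith
    qed
    hence "dim (W 0) \<ge> Suc DIM(complex^'n^'n)" using dW[of "Suc DIM(complex^'n^'n)"] by linarith
    moreover have "dim (W 0) \<le> DIM(complex^'n^'n)" by (rule dim_subset_UNIV)
    ultimately show False by simp
  qed
  then obtain j where j: "mpow H j \<in> W (Suc j)" by blast
  have "W (Suc j) = (\<lambda>Q. Q ** mpow H (Suc j)) ` span (range (mpow H))"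
    unfolding W_def rng_mul by (rule span_linear_image[OF linear_rmul])
  with j obtain Q where "Q \<in> span (range (mpow H))" "mpow H j = Q ** mpow H (Suc j)"
    by (auto simp del: mpow.simps)
  thus ?thesis by metis
qed
lemma pinv_exists:
  fixes M :: "complex^'n^'m"
  shows "\<exists>X. is_pinv M X"
proof -
  define H where "H = cadjoint M ** M"
  have herm: "cadjoint H = H" unfolding H_def by (simp add: cadj_mult)
  obtain j Q where Qs: "Q \<in> span (range (mpow H))" and Qj: "Q ** mpow H (Suc j) = mpow H j"
    using exists_Q by blast
  have sub: "subspace {B. cadjoint B = B \<and> B ** H = H ** B}"
    unfolding subspace_def
    by (simp add: cadj_add cadj_scaleR mm_add_r mm_scaleR_l mm_scaleR_r matrix_add_ldistrib)
  have "cadjoint Q = Q \<and> Q ** H = H ** Q"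
    apply (rule span_induct[where P="\<lambda>B. cadjoint B = B \<and> B ** H = H ** B", OF Qs])
    using sub apply simp
    using mpow_adj[OF herm] mpow_comm by auto
  hence Qadj: "cadjoint Q = Q" and Qc: "Q ** H = H ** Q" by auto
  have "(Q ** H) ** mpow H j ** H = mat 1 ** mpow H j ** H"
  proof -
    have "(Q ** H) ** mpow H j ** H = Q ** (H ** mpow H j) ** H" by (simp add: matrix_mul_assoc)
    also have "\<dots> = Q ** mpow H (Suc j) ** H" by (simp add: mpow_comm)
    also have "\<dots> = mat 1 ** mpow H j ** H" using Qj by simp
    finally show ?thesis .
  qed
  hence "(Q ** H) ** H = mat 1 ** H" by (rule cancel_pow[OF herm])
  hence "(Q ** H) ** cadjoint M ** M = mat 1 ** cadjoint M ** M"
    unfolding H_def by (simp add: matrix_mul_assoc)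
  hence key: "Q ** H ** cadjoint M = cadjoint M"
    using cancel_adj[of "Q ** H" M "mat 1"] by simp
  have key2: "M ** H ** Q = M"
  proof -
    have "cadjoint (Q ** H ** cadjoint M) = M ** H ** Q"
      by (simp add: cadj_mult herm Qadj matrix_mul_assoc)
    thus ?thesis using key by simp
  qed
  define X where "X = Q ** cadjoint M"
  have "is_pinv M X"
    unfolding is_pinv_def
  proof (intro conjI)
    have "M ** X ** M = M ** Q ** H" unfolding X_def H_def by (simp add: matrix_mul_assoc)
    also have "\<dots> = M ** H ** Q" by (simp add: Qc matrix_mul_assoc[symmetric])
    finally show "M ** X ** M = M" using key2 by simp
    have "X ** M ** X = Q ** (H ** Q) ** cadjoint M"
      unfolding X_def H_def by (simp add: matrix_mul_assoc)
    also have "\<dots> = Q ** (Q ** H ** cadjoint M)" by (simp add: Qc matrix_mul_assoc)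
    also have "\<dots> = X" unfolding X_def using key by simp
    finally show "X ** M ** X = X" .
    show "cadjoint (M ** X) = M ** X"
      unfolding X_def by (simp add: cadj_mult Qadj matrix_mul_assoc)
    have "X ** M = Q ** H" unfolding X_def H_def by (simp add: matrix_mul_assoc)
    thus "cadjoint (X ** M) = X ** M"
      using Qc by (simp add: cadj_mult Qadj herm)
  qed
  thus ?thesis by blast
qed

lemma pinv_unique:
  fixes M :: "complex^'n^'m"
  assumes X: "is_pinv M X" and Y: "is_pinv M Y"
  shows "X = Y"
proof -
  from X have x1: "M ** X ** M = M" and x2: "X ** M ** X = X"
    and x3: "cadjoint (M ** X) = M ** X" and x4: "cadjoint (X ** M) = X ** M"
    unfolding is_pinv_def by auto
  from Y have y1: "M ** Y ** M = M" and y2: "Y ** M ** Y = Y"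
    and y3: "cadjoint (M ** Y) = M ** Y" and y4: "cadjoint (Y ** M) = Y ** M"
    unfolding is_pinv_def by auto
  have "X = X ** (M ** X)" using x2 by (simp add: matrix_mul_assoc)
  also have "\<dots> = X ** cadjoint (M ** X)" using x3 by simp
  also have "\<dots> = X ** cadjoint X ** cadjoint (M ** Y ** M)" using y1 by (simp add: cadj_mult matrix_mul_assoc)
  also have "\<dots> = X ** cadjoint (M ** X) ** cadjoint (M ** Y)" by (simp add: cadj_mult matrix_mul_assoc)
  also have "\<dots> = X ** M ** X ** M ** Y" using x3 y3 by (simp add: matrix_mul_assoc)
  also have "\<dots> = X ** M ** Y" using x2 by simp
  finally have eX: "X = X ** M ** Y" .
  have "Y = (Y ** M) ** Y" using y2 by simp
  also have "\<dots> = cadjoint (Y ** M) ** Y" using y4 by simp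
  also have "\<dots> = cadjoint (M ** X ** M) ** cadjoint Y ** Y" using x1 by (simp add: cadj_mult matrix_mul_assoc)
  also have "\<dots> = cadjoint (X ** M) ** cadjoint (Y ** M) ** Y" by (simp add: cadj_mult matrix_mul_assoc)
  also have "\<dots> = X ** M ** (Y ** M ** Y)" using x4 y4 by (simp add: matrix_mul_assoc)
  also have "\<dots> = X ** M ** Y" using y2 by simp
  finally show ?thesis using eX by simp
qed

lemma is_pinv_pinv: "is_pinv M (pinv M)"
  unfolding pinv_def
  using pinv_exists[of M] pinv_unique[of M] by (metis theI)


definition cinner :: "complex^'n \<Rightarrow> complex^'n \<Rightarrow> complex" where
  "cinner x y = (\<Sum>i\<in>UNIV. cnj (x $ i) * y $ i)"

definition nsq :: "complex^'n \<Rightarrow> real" where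
  "nsq x = (\<Sum>i\<in>UNIV. (cmod (x $ i))\<^sup>2)"

lemma cinner_self: "cinner x x = complex_of_real (nsq x)"
  unfolding cinner_def nsq_def of_real_sum
  by (rule sum.cong) (simp_all add: mult.commute complex_mult_cnj cmod_power2)

lemma cinner_adj: "cinner x (A *v y) = cinner (cadjoint A *v x) y"
proof -
  have "cinner x (A *v y) = (\<Sum>i\<in>UNIV. \<Sum>j\<in>UNIV. cnj (x $ i) * A $ i $ j * y $ j)"
    by (simp add: cinner_def matrix_vector_mult_def sum_distrib_left mult.assoc)
  also have "\<dots> = (\<Sum>j\<in>UNIV. \<Sum>i\<in>UNIV. cnj (x $ i) * A $ i $ j * y $ j)"
    by (rule sum.swap)
  also have "\<dots> = cinner (cadjoint A *v x) y"
    by (simp add: cinner_def matrix_vector_mult_def cadjoint_def sum_distrib_right sum_distrib_left mult.commute mult.left_commute)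
  finally show ?thesis .
qed

lemma cinner_scale: "cinner x (c *s y) = c * cinner x y"
  by (simp add: cinner_def sum_distrib_left mult.left_commute)

lemma mv_scale: "A *v (c *s x) = c *s (A *v (x::complex^'n))"
  by (simp add: vec_eq_iff matrix_vector_mult_def sum_distrib_left mult.left_commute)

lemma nsq_nonneg: "nsq x \<ge> 0"
  unfolding nsq_def by (rule sum_nonneg) simp

lemma nsq_pos: "x \<noteq> 0 \<Longrightarrow> nsq x > 0"
proof -
  assume "x \<noteq> 0"
  then obtain i where "x $ i \<noteq> 0" by (auto simp: vec_eq_iff)
  hence "(cmod (x $ i))\<^sup>2 > 0" by simp
  also have "(cmod (x $ i))\<^sup>2 \<le> nsq x"
    unfolding nsq_def by (rule member_le_sum) auto
  finally show ?thesis .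
qed

lemma nsq_scale: "nsq (c *s x) = (cmod c)\<^sup>2 * nsq x"
  by (simp add: nsq_def sum_distrib_left norm_mult power_mult_distrib)

lemma frob_nonneg: "frob_sq M \<ge> 0"
  unfolding frob_sq_def by (intro sum_nonneg) simp

lemma nsq_mv_le: "nsq (X *v v) \<le> frob_sq X * nsq v"
proof -
  have row: "(cmod ((X *v v) $ i))\<^sup>2 \<le> (\<Sum>j\<in>UNIV. (cmod (X $ i $ j))\<^sup>2) * nsq v" for i
  proof -
    have "cmod ((X *v v) $ i) \<le> (\<Sum>j\<in>UNIV. cmod (X $ i $ j) * cmod (v $ j))"
      unfolding matrix_vector_mult_def vec_lambda_beta
      by (rule order_trans[OF norm_sum]) (simp add: norm_mult)
    hence "(cmod ((X *v v) $ i))\<^sup>2 \<le> (\<Sum>j\<in>UNIV. cmod (X $ i $ j) * cmod (v $ j))\<^sup>2"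
      by (intro power_mono) auto
    also have "\<dots> \<le> (\<Sum>j\<in>UNIV. (cmod (X $ i $ j))\<^sup>2) * (\<Sum>j\<in>UNIV. (cmod (v $ j))\<^sup>2)"
      by (rule Cauchy_Schwarz_ineq_sum)
    finally show ?thesis unfolding nsq_def .
  qed
  have "nsq (X *v v) \<le> (\<Sum>i\<in>UNIV. (\<Sum>j\<in>UNIV. (cmod (X $ i $ j))\<^sup>2) * nsq v)"
    unfolding nsq_def[of "X *v v"] by (rule sum_mono) (rule row)
  also have "\<dots> = frob_sq X * nsq v"
    by (simp add: frob_sq_def sum_distrib_right)
  finally show ?thesis .
qed

lemma pinv_MMadj: "pinv M ** M ** cadjoint M = cadjoint M"
proof -
  have p: "is_pinv M (pinv M)" by (rule is_pinv_pinv)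
  hence "cadjoint (pinv M ** M) = pinv M ** M" and "M ** pinv M ** M = M"
    unfolding is_pinv_def by auto
  hence "pinv M ** M ** cadjoint M = cadjoint (M ** (pinv M ** M))"
    by (simp add: cadj_mult)
  also have "\<dots> = cadjoint M" using \<open>M ** pinv M ** M = M\<close> by (simp add: matrix_mul_assoc)
  finally show ?thesis .
qed

theorem lemma4p15:
  fixes T :: "('n::finite) tensor3" and r :: nat and a :: "complex^'n" and kF :: real
  assumes "sym_tensor T"
    and "r_diagonalisable r T"
    and "rank (slice_comb T a) = r"
    and "kF > 0"
    and "kappa_F (slice_comb T a) < kF"
  shows "\<forall>\<sigma>. \<sigma> \<noteq> 0 \<and>
           is_eigenvalue (\<chi> i j. complex_of_real (2 * kF) *
              (slice_comb T a ** cadjoint (slice_comb T a)) $ i $ j) \<sigma>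
         \<longrightarrow> \<sigma> \<in> \<real> \<and> 2 / real r \<le> Re \<sigma>"
proof (intro allI impI, elim conjE)
  fix \<sigma> :: complex
  assume s0: "\<sigma> \<noteq> 0"
  define M where "M = slice_comb T a"
  define X where "X = pinv M"
  assume "is_eigenvalue (\<chi> i j. complex_of_real (2 * kF) *
              (slice_comb T a ** cadjoint (slice_comb T a)) $ i $ j) \<sigma>"
  then obtain v where v0: "v \<noteq> 0" and ev: "(\<chi> i j. complex_of_real (2 * kF) *
              (M ** cadjoint M) $ i $ j) *v v = \<sigma> *s v"
    unfolding is_eigenvalue_def M_def by blast
  have kF0: "complex_of_real (2 * kF) \<noteq> 0" using assms(4) by simp
  define lam where "lam = \<sigma> / complex_of_real (2 * kF)"
  have "(\<chi> i j. complex_of_real (2 * kF) * (M ** cadjoint M) $ i $ j) *v v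
        = complex_of_real (2 * kF) *s ((M ** cadjoint M) *v v)"
    by (simp add: vec_eq_iff matrix_vector_mult_def sum_distrib_left mult.assoc)
  with ev have "complex_of_real (2 * kF) *s ((M ** cadjoint M) *v v) = \<sigma> *s v" by simp
  hence MMv: "(M ** cadjoint M) *v v = lam *s v"
    using kF0 unfolding lam_def by (simp add: vec_eq_iff field_simps)
  have l0: "lam \<noteq> 0" using s0 kF0 unfolding lam_def by simp
  define w where "w = cadjoint M *v v"
  have Mw: "M *v w = lam *s v" unfolding w_def using MMv by (simp add: matrix_vector_mul_assoc)
  have w0: "w \<noteq> 0"
  proof
    assume "w = 0"
    hence "lam *s v = 0" using Mw by simp
    with l0 v0 show False by (simp add: vec_eq_iff)
  qed
  have Xw: "lam *s (X *v v) = w"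
  proof -
    have "X *v (M *v w) = (X ** M ** cadjoint M) *v v"
      unfolding w_def by (simp add: matrix_vector_mul_assoc matrix_mul_assoc)
    also have "\<dots> = w" unfolding X_def w_def by (simp add: pinv_MMadj)
    finally show ?thesis using Mw by (simp add: mv_scale)
  qed
  have "complex_of_real (nsq w) = cinner w w" by (simp add: cinner_self)
  also have "\<dots> = cinner v (M *v w)" unfolding w_def by (simp add: cinner_adj)
  also have "\<dots> = lam * complex_of_real (nsq v)" using Mw by (simp add: cinner_scale cinner_self)
  finally have eq1: "complex_of_real (nsq w) = lam * complex_of_real (nsq v)" .
  have nv: "nsq v > 0" using v0 by (rule nsq_pos)
  have nw: "nsq w > 0" using w0 by (rule nsq_pos)
  define l where "l = nsq w / nsq v"
  have lpos: "l > 0" unfolding l_def using nv nw by simp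
  have ll: "lam = complex_of_real l"
    using eq1 nv unfolding l_def by (simp add: field_simps)
  have "nsq w = l\<^sup>2 * nsq (X *v v)"
    using Xw[symmetric] ll lpos by (simp add: nsq_scale)
  also have "\<dots> \<le> l\<^sup>2 * (frob_sq X * nsq v)"
    by (rule mult_left_mono[OF nsq_mv_le]) simp
  finally have "l * nsq v \<le> l\<^sup>2 * (frob_sq X * nsq v)"
    using nv unfolding l_def by simp
  hence "l * nsq v * 1 \<le> l * nsq v * (l * frob_sq X)"
    by (simp add: power2_eq_square algebra_simps)
  hence F1: "1 \<le> l * frob_sq X"
    using lpos nv by (simp add: mult_le_cancel_left_pos)
  have "frob_sq X < kF"
    using assms(5) frob_nonneg[of M] unfolding kappa_F_def X_def M_def by linarith
  hence "l * frob_sq X < l * kF" using lpos by simp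
  with F1 have lk: "1 < l * kF" by linarith
  have sig: "\<sigma> = complex_of_real (2 * kF * l)"
    using ll kF0 unfolding lam_def by (simp add: field_simps)
  have "2 / real r \<le> 2"
    by (cases r) (simp_all add: divide_le_eq)
  also have "2 < 2 * kF * l" using lk by (simp add: algebra_simps)
  finally show "\<sigma> \<in> \<real> \<and> 2 / real r \<le> Re \<sigma>" using sig by simp
qed

end
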